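(* Let $\psi_A\in(0,2\pi)\setminus\{\pi\}$, $\eta\neq0$, $\phi\in(0,\pi)$, and put $A=\tan\frac{\psi_A}{2}$, $h=\frac{\sinh\eta}{\sin\phi}$, $z=\eta+i\phi$. Let $$Q_{A_1}=\begin{pmatrix}\cos\frac{\psi_A}{2}-i\cosh z\,\sin\frac{\psi_A}{2}&i\sinh z\,\sin\frac{\psi_A}{2}\\-i\sinh z\,\sin\frac{\psi_A}{2}&\cos\frac{\psi_A}{2}+i\cosh z\,\sin\frac{\psi_A}{2}\end{pmatrix}.$$ Let $a,b,c,\mu,\chi\in\mathbb{R}$ with $c\neq0$, set $$M=\begin{pmatrix}a+ib&e^{-\mu}c\,e^{i\chi}\\-e^{\mu}c\,e^{-i\chi}&a-ib\end{pmatrix},\qquad P=Q_{A_1}^{-1}M,$$ and suppose $\overline{P_{11}}=P_{22}$. Then, with $m=\tanh\mu$ and provided $\overline{P_{21}}\neq0$ and $(A-h)m-h(hA+1)\neq0$, $$-\frac{P_{12}}{\overline{P_{21}}}=\frac{(A+h)m+h(hA-1)}{(A-h)m-h(hA+1)},$$ which in particular is independent of $a,b,c,\chi$. Equivalently, if this ratio equals $e^{2\mu'}$ with $\mu'\in\mathbb{R}$ and $m'=\tanh\mu'$, then $$mm'-\frac{h}{A}(m+m')-h^2=0.$$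
   Context: Matrices are $\mathrm{SL}(2,\mathbb{C})$ (or $\mathrm{GL}(2,\mathbb{C})$) representatives of Lorentz transformations; $P_{ij}$ denotes the $(i,j)$ entry and the bar denotes complex conjugation. Interpretation: $Q_{A_1}$ is the holonomy of an external semi-infinite defect (deficit angle $\psi_A$, at angle $\phi$ and relative rapidity $\eta$ to a stationary defect $B$ along the $z$-axis); $M$ is the holonomy of an intermediate defect ending on a junction moving with rapidity $\mu$ along the stationary defect $B_1$; the condition $\overline{P_{11}}=P_{22}$ expresses that the next intermediate defect ends on a subluminal junction on $B_2$, whose rapidity $\mu'$ is defined by $e^{2\mu'}=-P_{12}/\overline{P_{21}}$. *)

theory Defs
  imports "HOL-Analysis.Analysis"
begin

definition mat2 :: "complex \<Rightarrow> complex \<Rightarrow> complex \<Rightarrow> complex \<Rightarrow> complex^2^2" where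
  "mat2 p11 p12 p21 p22 =
     (\<chi> i j. if i = 1 then (if j = 1 then p11 else p12) else (if j = 1 then p21 else p22))"

text \<open>Holonomy of the external defect A_1 (deficit angle psiA, z = eta + i phi).\<close>
definition QA1 :: "real \<Rightarrow> complex \<Rightarrow> complex^2^2" where
  "QA1 psiA z = mat2
     (of_real (cos (psiA/2)) - \<i> * cosh z * of_real (sin (psiA/2)))
     (\<i> * sinh z * of_real (sin (psiA/2)))
     (- \<i> * sinh z * of_real (sin (psiA/2)))
     (of_real (cos (psiA/2)) + \<i> * cosh z * of_real (sin (psiA/2)))"

definition Mmat :: "real \<Rightarrow> real \<Rightarrow> real \<Rightarrow> real \<Rightarrow> real \<Rightarrow> complex^2^2" where
  "Mmat a b c \<mu> \<chi>' = mat2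
     (Complex a b)
     (of_real (exp (-\<mu>) * c) * cis \<chi>')
     (- of_real (exp \<mu> * c) * cis (-\<chi>'))
     (Complex a (-b))"

end

theory Submission imports Defs begin

lemma cosh_Complex: "cosh (Complex x y) = Complex (cosh x * cos y) (sinh x * sin y)"
  by (simp add: cosh_def sinh_def complex_eq_iff exp_eq_polar exp_minus field_simps Re_divide Im_divide power2_eq_square)
lemma sinh_Complex: "sinh (Complex x y) = Complex (sinh x * cos y) (cosh x * sin y)"
  by (simp add: cosh_def sinh_def complex_eq_iff exp_eq_polar exp_minus field_simps Re_divide Im_divide power2_eq_square)

lemma mat2_nth [simp]:
  "mat2 a b c d $ 1 $ 1 = a" "mat2 a b c d $ 1 $ 2 = b"
  "mat2 a b c d $ 2 $ 1 = c" "mat2 a b c d $ 2 $ 2 = d"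
  by (simp_all add: mat2_def)

lemma mat2_eq: "(A :: complex^2^2) = mat2 (A$1$1) (A$1$2) (A$2$1) (A$2$2)"
  by (simp add: mat2_def vec_eq_iff forall_2)

lemma det_aux:
  fixes x y C S :: complex
  assumes "x^2 + y^2 = 1" "C^2 = S^2 + 1"
  shows "(x - \<i> * C * y) * (x + \<i> * C * y) - (\<i> * S * y) * (- \<i> * S * y) = 1"
proof -
  have i2: "\<i> * \<i> = (-1::complex)" by simp
  show ?thesis using assms i2 by algebra
qed

lemma aux_RE: fixes R E :: real assumes "R > 0" "E = 1 / R"
  shows "(1 - E) / (1 + E) = (R - 1) / (R + 1)"
proof -
  have "1 - E = (R - 1) / R" "1 + E = (R + 1) / R" using assms by (simp_all add: field_simps)
  then show ?thesis using assms(1) by simp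
qed
lemma tanh_exp2: "tanh (x::real) = (exp (2*x) - 1) / (exp (2*x) + 1)"
proof -
  have "exp (- 2 * x) = 1 / exp (2 * x)" by (simp add: exp_minus divide_inverse)
  then show ?thesis unfolding tanh_real_altdef by (rule aux_RE[OF exp_gt_zero])
qed

lemma mat2_cong: "a = a' \<Longrightarrow> b = b' \<Longrightarrow> c = c' \<Longrightarrow> d = d' \<Longrightarrow> mat2 a b c d = mat2 a' b' c' d'"
  by simp

lemma mat2_mult:
  "mat2 a b c d ** mat2 e f g h = mat2 (a*e+b*g) (a*f+b*h) (c*e+d*g) (c*f+d*h)"
  by (simp add: matrix_matrix_mult_def mat2_def vec_eq_iff forall_2 sum_2)

lemma mat2_one: "mat2 1 0 0 1 = mat 1"
  by (simp add: mat2_def mat_def vec_eq_iff forall_2)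

lemma mat2_inv:
  assumes "a*d - b*c = 1"
  shows "matrix_inv (mat2 a b c d) = mat2 d (-b) (-c) a"
proof -
  let ?A = "mat2 a b c d" and ?B = "mat2 d (-b) (-c) a"
  have 1: "?A ** ?B = mat 1" using assms
    by (simp add: mat2_mult flip: mat2_one) (simp add: algebra_simps)
  have 2: "?B ** ?A = mat 1" using assms
    by (simp add: mat2_mult flip: mat2_one) (simp add: algebra_simps)
  have ex: "\<exists>A'. ?A ** A' = mat 1 \<and> A' ** ?A = mat 1" using 1 2 by blast
  define X where "X = matrix_inv ?A"
  have X: "?A ** X = mat 1 \<and> X ** ?A = mat 1"
    unfolding X_def matrix_inv_def by (rule someI_ex[OF ex])
  have "X = X ** (?A ** ?B)" using 1 by (simp add: matrix_mul_rid)
  also have "\<dots> = (X ** ?A) ** ?B" by (simp add: matrix_mul_assoc)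
  also have "\<dots> = ?B" using X by (simp add: matrix_mul_lid)
  finally show ?thesis unfolding X_def .
qed

lemma rX_lemma: fixes be sh si ch sm co cm al :: real
  assumes "sh \<noteq> 0" "si \<noteq> 0" "ch^2 = sh^2 + 1" "co^2 + si^2 = 1"
  shows "Complex (-be * ch * si) (be * sh * co) * Complex (- ch * sm / sh) (- co * cm / si)
     - Complex (al - be * sh * si) (be * ch * co) * of_real (cm - sm)
     = of_real (be * si * sm / sh + be * sh * cm / si - al * cm + al * sm)"
proof -
  have c: "co^2 = 1 - si^2" using assms by simp
  have "be * ch^2 * si * sm / sh + be * sh * co^2 * cm / si - (al - be * sh * si) * (cm - sm) = be * si * sm / sh + be * sh * cm / si - al * cm + al * sm"
    unfolding assms(3) c using assms(1,2) by (simp add: field_simps power2_eq_square)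
  then show ?thesis using assms(1,2) by (simp add: complex_eq_iff field_simps power2_eq_square)
qed
lemma rY_lemma: fixes be sh si ch sm co cm al :: real
  assumes "sh \<noteq> 0" "si \<noteq> 0" "ch^2 = sh^2 + 1" "co^2 + si^2 = 1"
  shows "cnj (Complex (-be * ch * si) (be * sh * co)) * Complex (- ch * sm / sh) (- co * cm / si)
     - cnj (Complex (al + be * sh * si) (-be * ch * co)) * of_real (cm + sm)
     = of_real (be * si * sm / sh - be * sh * cm / si - al * cm - al * sm)"
proof -
  have c: "co^2 = 1 - si^2" using assms by simp
  have "be * ch^2 * si * sm / sh - be * sh * co^2 * cm / si - (al + be * sh * si) * (cm + sm) = be * si * sm / sh - be * sh * cm / si - al * cm - al * sm"
    unfolding assms(3) c using assms(1,2) by (simp add: field_simps power2_eq_square)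
  then show ?thesis using assms(1,2) by (simp add: complex_eq_iff field_simps power2_eq_square)
qed
lemma XN: fixes be sh si sm cm al :: real
  assumes "al \<noteq> 0" "cm \<noteq> 0" "sh \<noteq> 0" "si \<noteq> 0"
  shows "be * si * sm / sh + be * sh * cm / si - al * cm + al * sm = al * cm * ((be/al + sh/si) * (sm/cm) + sh/si * (sh/si * (be/al) - 1)) / (sh/si)"
  using assms by (simp add: field_simps power2_eq_square)
lemma YD: fixes be sh si sm cm al :: real
  assumes "al \<noteq> 0" "cm \<noteq> 0" "sh \<noteq> 0" "si \<noteq> 0"
  shows "be * si * sm / sh - be * sh * cm / si - al * cm - al * sm = al * cm * ((be/al - sh/si) * (sm/cm) - sh/si * (sh/si * (be/al) + 1)) / (sh/si)"
  using assms by (simp add: field_simps power2_eq_square)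
lemma fin_lemma: fixes A m h t :: real
  assumes "A \<noteq> 0" "A * m - h \<noteq> 0" "t = h * (m + h * A) / (A * m - h)"
  shows "m * t - h / A * (m + t) - h^2 = 0"
proof -
  have ht: "t * (A * m - h) = h * (m + h * A)" using assms(2,3) by simp
  have "A * (m * t - h / A * (m + t) - h^2) = t * (A * m - h) - h * m - A * h^2"
    using assms(1) by (simp add: field_simps)
  also have "\<dots> = 0" unfolding ht by (simp add: algebra_simps power2_eq_square)
  finally show ?thesis using assms(1) by simp
qed

lemma H2_lemma: fixes p w r v u s K :: complex and cm sm :: real
  assumes "cnj p * cnj w + cnj r * (K * of_real (cm + sm)) = r * (K * of_real (cm - sm)) + s * cnj w"
  shows "(cnj p - s) * cnj w = K * (r * of_real (cm - sm) - cnj r * of_real (cm + sm))"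
  using assms by (simp add: algebra_simps)

lemma dW_lemma: fixes be sh si ch sm co cm :: real
  assumes "be \<noteq> 0" "sh \<noteq> 0" "si \<noteq> 0"
  shows "Complex (2 * be * ch * si * sm) (2 * be * sh * co * cm) / of_real (-2 * be * sh * si) = Complex (- ch * sm / sh) (- co * cm / si)"
  using assms by (simp add: complex_eq_iff Re_divide Im_divide field_simps power2_eq_square)

lemma d2_lemma: fixes be ch si sh co cm sm :: real shows "Complex (-be * ch * si) (be * sh * co) * of_real (cm - sm) - cnj (Complex (-be * ch * si) (be * sh * co)) * of_real (cm + sm) = Complex (2 * be * ch * si * sm) (2 * be * sh * co * cm)"
  by (simp add: complex_eq_iff algebra_simps)

lemma d1_lemma: fixes al be ch si sh co :: real shows "cnj (Complex (al - be * sh * si) (be * ch * co)) - Complex (al + be * sh * si) (-be * ch * co) = of_real (-2 * be * sh * si)"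
  by (simp add: complex_eq_iff)

lemma P12_lemma: fixes p K W r :: complex and cm sm X :: real
  assumes "r * W - p * of_real (cm - sm) = of_real X"
  shows "- (p * (K * of_real (cm - sm)) - r * (K * W)) = K * of_real X"
  unfolding assms[symmetric] by (simp add: algebra_simps)

lemma P21_lemma: fixes s K W r :: complex and cm sm Y :: real
  assumes "cnj r * W - cnj s * of_real (cm + sm) = of_real Y"
  shows "cnj r * (K * W) - cnj s * (K * of_real (cm + sm)) = K * of_real Y"
  unfolding assms[symmetric] by (simp add: algebra_simps)

lemma t2_lemma: fixes N D :: real assumes "N + D \<noteq> 0" "D \<noteq> 0" shows "(N / D - 1) / (N / D + 1) = (N - D) / (N + D)"
proof -
  have "N / D - 1 = (N - D) / D" "N / D + 1 = (N + D) / D" using assms(2) by (simp_all add: field_simps)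
  then show ?thesis using assms by simp
qed

lemma solve_lemma: fixes d x K Z W :: complex
  assumes "d \<noteq> 0" "d * x = K * Z" "Z / d = W" shows "x = K * W"
proof -
  have "x = (d * x) / d" using assms(1) by simp
  also have "\<dots> = K * (Z / d)" unfolding assms(2) by simp
  finally show ?thesis unfolding assms(3) .
qed
lemma ratio_lemma: fixes K :: complex and X Y :: real
  assumes "K \<noteq> 0" "Y \<noteq> 0"
  shows "K * of_real X / (K * of_real Y) = of_real (X / Y)"
  using assms by simp
lemma XY_lemma: fixes a c h N D :: real
  assumes "a \<noteq> 0" "c \<noteq> 0" "h \<noteq> 0" "D \<noteq> 0"
  shows "(a * c * N / h) / (a * c * D / h) = N / D"
  using assms by simp
lemma AM_lemma: fixes A m h :: real assumes "(A + h) * m + h * (h * A - 1) + ((A - h) * m - h * (h * A + 1)) \<noteq> 0"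
  shows "A * m - h \<noteq> 0" using assms by (auto simp: algebra_simps)
lemma ND_lemma: fixes N D :: real assumes "N / D + 1 > 0" "D \<noteq> 0" shows "N + D \<noteq> 0"
  using assms by (auto simp: field_simps)
lemma t3_lemma: fixes A m h :: real
  shows "((A + h) * m + h * (h * A - 1) - ((A - h) * m - h * (h * A + 1))) / ((A + h) * m + h * (h * A - 1) + ((A - h) * m - h * (h * A + 1))) = h * (m + h * A) / (A * m - h)"
proof -
  have e1: "(A + h) * m + h * (h * A - 1) - ((A - h) * m - h * (h * A + 1)) = 2 * (h * (m + h * A))"
    by (simp add: algebra_simps)
  have e2: "(A + h) * m + h * (h * A - 1) + ((A - h) * m - h * (h * A + 1)) = 2 * (A * m - h)"
    by (simp add: algebra_simps)
  show ?thesis unfolding e1 e2 by (simp only: mult_divide_mult_cancel_left_if) simp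
qed

theorem mainTheorem8:
  fixes psiA \<eta> \<phi> a b c \<mu> \<chi>' :: real
  assumes "0 < psiA" "psiA < 2 * pi" "psiA \<noteq> pi"
    and "\<eta> \<noteq> 0" and "0 < \<phi>" "\<phi> < pi"
    and "c \<noteq> 0"
  defines "A \<equiv> tan (psiA/2)"
    and "h \<equiv> sinh \<eta> / sin \<phi>"
    and "m \<equiv> tanh \<mu>"
    and "P \<equiv> matrix_inv (QA1 psiA (Complex \<eta> \<phi>)) ** Mmat a b c \<mu> \<chi>'"
  assumes "cnj (P $ 1 $ 1) = P $ 2 $ 2"
    and "cnj (P $ 2 $ 1) \<noteq> 0"
    and "(A - h) * m - h * (h * A + 1) \<noteq> 0"
  shows "- (P $ 1 $ 2) / cnj (P $ 2 $ 1)
           = of_real (((A + h) * m + h * (h * A - 1)) / ((A - h) * m - h * (h * A + 1)))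
       \<and> (\<forall>\<mu>'::real. - (P $ 1 $ 2) / cnj (P $ 2 $ 1) = of_real (exp (2 * \<mu>'))
             \<longrightarrow> m * tanh \<mu>' - h / A * (m + tanh \<mu>') - h^2 = 0)"
proof -
  define al where "al = cos (psiA/2)"
  define be where "be = sin (psiA/2)"
  define ch where "ch = cosh \<eta>"
  define sh where "sh = sinh \<eta>"
  define co where "co = cos \<phi>"
  define si where "si = sin \<phi>"
  define cm where "cm = cosh \<mu>"
  define sm where "sm = sinh \<mu>"
  have ab: "al^2 + be^2 = 1" unfolding al_def be_def by simp
  have cs: "co^2 + si^2 = 1" unfolding co_def si_def by simp
  have hh: "ch^2 = sh^2 + 1" unfolding ch_def sh_def by (rule cosh_square_eq)
  have "be > 0" unfolding be_def using assms(1,2) by (intro sin_gt_zero) auto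
  then have be0: "be \<noteq> 0" by simp
  have al0: "al \<noteq> 0"
  proof
    assume "al = 0"
    then have "cos (psiA/2) = 0" by (simp add: al_def)
    then have "cos (psiA/2) = cos (pi/2)" by simp
    moreover have "0 \<le> psiA/2" "psiA/2 \<le> pi" using assms(1,2) by auto
    ultimately have "psiA/2 = pi/2" using cos_inj_pi[of "psiA/2" "pi/2"] by simp
    then show False using assms(3) by simp
  qed
  have "si > 0" unfolding si_def using assms(5,6) by (rule sin_gt_zero)
  then have si0: "si \<noteq> 0" by simp
  have sh0: "sh \<noteq> 0" unfolding sh_def using assms(4) by simp
  have cm0: "cm \<noteq> 0" unfolding cm_def by simp
  have em: "exp \<mu> = cm + sm" unfolding cm_def sm_def by (simp add: cosh_plus_sinh)
  have emm: "exp (-\<mu>) = cm - sm" unfolding cm_def sm_def by (simp add: cosh_minus_sinh)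
  define p where "p = Complex (al - be * sh * si) (be * ch * co)"
  define r where "r = Complex (-be * ch * si) (be * sh * co)"
  define s where "s = Complex (al + be * sh * si) (-be * ch * co)"
  have Q: "QA1 psiA (Complex \<eta> \<phi>) = mat2 s r (-r) p"
    unfolding QA1_def cosh_Complex sinh_Complex p_def r_def s_def al_def be_def ch_def sh_def co_def si_def
    by (intro mat2_cong) (simp_all add: complex_eq_iff algebra_simps)
  have det: "s * p - r * (-r) = 1"
  proof -
    have "s * p - r * (-r) = QA1 psiA (Complex \<eta> \<phi>) $1$1 * QA1 psiA (Complex \<eta> \<phi>) $2$2
        - QA1 psiA (Complex \<eta> \<phi>) $1$2 * QA1 psiA (Complex \<eta> \<phi>) $2$1" by (simp add: Q)
    also have "\<dots> = 1"
    proof -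
      have c1: "(cosh (Complex \<eta> \<phi>))^2 = (sinh (Complex \<eta> \<phi>))^2 + 1" by (rule cosh_square_eq)
      have c2: "(complex_of_real (cos (psiA/2)))^2 + (complex_of_real (sin (psiA/2)))^2 = 1"
        by (metis of_real_add of_real_power of_real_1 sin_cos_squared_add2)
      show ?thesis unfolding QA1_def mat2_nth using c1 c2
        using det_aux[OF c2 c1] by simp
    qed
    finally show ?thesis .
  qed
  define K where "K = complex_of_real c * cis \<chi>'"
  define w where "w = Complex a b"
  define u where "u = K * of_real (cm - sm)"
  define v where "v = cnj K * of_real (cm + sm)"
  have M: "Mmat a b c \<mu> \<chi>' = mat2 w u (-v) (cnj w)"
    unfolding Mmat_def w_def u_def v_def K_def em[symmetric] emm[symmetric]
    by (intro mat2_cong) (simp_all add: complex_eq_iff cis.sel)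
  have Pm: "P = mat2 (p * w + r * v) (p * u - r * cnj w) (r * w - s * v) (r * u + s * cnj w)"
    unfolding P_def Q mat2_inv[OF det] M mat2_mult by (simp add: algebra_simps)
  have H: "cnj p * cnj w + cnj r * cnj v = r * u + s * cnj w"
    using \<open>cnj (P $ 1 $ 1) = P $ 2 $ 2\<close> unfolding Pm by simp
  have cv: "cnj v = K * of_real (cm + sm)" unfolding v_def by simp
  have H2: "(cnj p - s) * cnj w = K * (r * of_real (cm - sm) - cnj r * of_real (cm + sm))"
    using H unfolding cv u_def by (rule H2_lemma)
  have d1: "cnj p - s = of_real (-2 * be * sh * si)"
    unfolding p_def s_def by (rule d1_lemma)
  have d2: "r * of_real (cm - sm) - cnj r * of_real (cm + sm) = Complex (2 * be * ch * si * sm) (2 * be * sh * co * cm)"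
    unfolding r_def by (rule d2_lemma)
  define W where "W = Complex (- ch * sm / sh) (- co * cm / si)"
  have dW: "Complex (2 * be * ch * si * sm) (2 * be * sh * co * cm) / of_real (-2 * be * sh * si) = W"
    unfolding W_def by (rule dW_lemma[OF be0 sh0 si0])
  have wb: "cnj w = K * W"
  proof -
    have e1: "of_real (-2 * be * sh * si) * cnj w = K * Complex (2 * be * ch * si * sm) (2 * be * sh * co * cm)"
      using H2 unfolding d1 d2 .
    have e0: "complex_of_real (-2 * be * sh * si) \<noteq> 0" using be0 sh0 si0 by simp
    show ?thesis by (rule solve_lemma[OF e0 e1 dW])
  qed
  define X where "X = be * si * sm / sh + be * sh * cm / si - al * cm + al * sm"
  define Y where "Y = be * si * sm / sh - be * sh * cm / si - al * cm - al * sm"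
  have rX: "r * W - p * of_real (cm - sm) = of_real X"
    unfolding r_def W_def p_def X_def by (rule rX_lemma[OF sh0 si0 hh cs])
  have rY: "cnj r * W - cnj s * of_real (cm + sm) = of_real Y"
    unfolding r_def W_def s_def Y_def by (rule rY_lemma[OF sh0 si0 hh cs])
  have P12: "- (P $ 1 $ 2) = K * of_real X"
    unfolding Pm mat2_nth wb u_def by (rule P12_lemma[OF rX])
  have P21: "cnj (P $ 2 $ 1) = K * of_real Y"
    unfolding Pm mat2_nth complex_cnj_diff complex_cnj_mult wb cv by (rule P21_lemma[OF rY])
  define N where "N = (A + h) * m + h * (h * A - 1)"
  define D where "D = (A - h) * m - h * (h * A + 1)"
  have Av: "A = be / al" unfolding A_def al_def be_def by (simp only: tan_def)
  have hv: "h = sh / si" unfolding h_def sh_def si_def by (rule refl)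
  have mv: "m = sm / cm" unfolding m_def sm_def cm_def by (rule tanh_def)
  have h0: "h \<noteq> 0" unfolding hv using sh0 si0 by simp
  have XN: "X = al * cm * N / h" unfolding X_def N_def Av hv mv by (rule XN[OF al0 cm0 sh0 si0])
  have YD: "Y = al * cm * D / h" unfolding Y_def D_def Av hv mv by (rule YD[OF al0 cm0 sh0 si0])
  have K0: "K \<noteq> 0" unfolding K_def using \<open>c \<noteq> 0\<close> by simp
  have Y0: "Y \<noteq> 0"
  proof
    assume "Y = 0"
    then have "cnj (P $ 2 $ 1) = 0" unfolding P21 by simp
    then show False using \<open>cnj (P $ 2 $ 1) \<noteq> 0\<close> by contradiction
  qed
  have D0: "D \<noteq> 0" using \<open>(A - h) * m - h * (h * A + 1) \<noteq> 0\<close> D_def by simp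
  have ratio: "- (P $ 1 $ 2) / cnj (P $ 2 $ 1) = of_real (N / D)"
  proof -
    have "- (P $ 1 $ 2) / cnj (P $ 2 $ 1) = of_real (X / Y)"
      unfolding P12 P21 by (rule ratio_lemma[OF K0 Y0])
    also have "X / Y = N / D" unfolding XN YD by (rule XY_lemma[OF al0 cm0 h0 D0])
    finally show ?thesis .
  qed
  have A0: "A \<noteq> 0" using Av al0 be0 by simp
  show ?thesis
  proof (intro conjI allI impI)
    show "- (P $ 1 $ 2) / cnj (P $ 2 $ 1) = of_real (((A + h) * m + h * (h * A - 1)) / ((A - h) * m - h * (h * A + 1)))"
      using ratio N_def D_def by simp
  next
    fix \<mu>' :: real
    assume e: "- (P $ 1 $ 2) / cnj (P $ 2 $ 1) = of_real (exp (2 * \<mu>'))"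
    have "complex_of_real (N / D) = complex_of_real (exp (2 * \<mu>'))" using ratio e by (rule subst)
    then have R: "N / D = exp (2 * \<mu>')" by (simp only: of_real_eq_iff)
    have t: "tanh \<mu>' = (N / D - 1) / (N / D + 1)" unfolding R by (rule tanh_exp2)
    have "N / D + 1 > 0" unfolding R by (simp add: add_pos_pos)
    then have ND: "N + D \<noteq> 0" using D0 by (rule ND_lemma)
    have t2: "tanh \<mu>' = (N - D) / (N + D)" unfolding t by (rule t2_lemma[OF ND D0])
    have AM: "A * m - h \<noteq> 0" using ND unfolding N_def D_def by (rule AM_lemma)
    have t3: "tanh \<mu>' = h * (m + h * A) / (A * m - h)"
      unfolding t2 N_def D_def by (rule t3_lemma)
    show "m * tanh \<mu>' - h / A * (m + tanh \<mu>') - h^2 = 0"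
      by (rule fin_lemma[OF A0 AM t3])
  qed
qed

end
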